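(* Let $c\ge 2$ be the number of colors. Suppose a board with $m$ rows and $n$ columns has a perfect layout, and let $p$ and $q$ be respectively the number of rows and the number of columns that contain at least one sink. Then $$c(m+n)+(c-2)(p+q)\le mn-c.$$
   Context: A board is an $m\times n$ grid of unit cells in which exactly $c$ cells are sinks, one of each of $c$ colors, and all other cells are empty. A layout places, in some of the empty cells, arrows, each having one of the $c$ colors and one of the four cardinal directions. A packet of color $i$ may enter the grid through any unit edge of the outer boundary of the grid, into the adjacent cell, moving perpendicular to that edge into the grid; it moves one cell at a time in its current direction, and whenever it enters a cell containing an arrow of color $i$ its direction becomes that arrow's direction (arrows of other colors are ignored). The packet succeeds if it enters the sink of color $i$; it fails if it enters a sink of another color, leaves the grid, or travels forever without reaching a sink. A perfect layout is a layout in which every packet of every color entering through every boundary edge succeeds. *)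

theory Defs
  imports Main
begin

text \<open>Cells of an m x n board are pairs (row, column) of integers with
  0 <= row < m and 0 <= column < n. Integer coordinates allow a packet to
  step outside the grid. Colors are the naturals 0..c-1.\<close>

datatype dir = North | South | East | West

fun delta :: "dir \<Rightarrow> int \<times> int" where
  "delta North = (-1, 0)"
| "delta South = (1, 0)"
| "delta East = (0, 1)"
| "delta West = (0, -1)"

definition in_grid :: "nat \<Rightarrow> nat \<Rightarrow> int \<times> int \<Rightarrow> bool" where
  "in_grid m n p \<longleftrightarrow> 0 \<le> fst p \<and> fst p < int m \<and> 0 \<le> snd p \<and> snd p < int n"

definition board :: "nat \<Rightarrow> nat \<Rightarrow> nat \<Rightarrow> (nat \<Rightarrow> int \<times> int) \<Rightarrow> bool" where
  "board m n c sink \<longleftrightarrow> (\<forall>k<c. in_grid m n (sink k)) \<and> inj_on sink {..<c}"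

definition is_sink :: "nat \<Rightarrow> (nat \<Rightarrow> int \<times> int) \<Rightarrow> int \<times> int \<Rightarrow> bool" where
  "is_sink c sink p \<longleftrightarrow> (\<exists>k<c. sink k = p)"

definition layout :: "nat \<Rightarrow> nat \<Rightarrow> nat \<Rightarrow> (nat \<Rightarrow> int \<times> int)
    \<Rightarrow> (int \<times> int \<Rightarrow> (nat \<times> dir) option) \<Rightarrow> bool" where
  "layout m n c sink arr \<longleftrightarrow>
     (\<forall>p a. arr p = Some a \<longrightarrow> in_grid m n p \<and> \<not> is_sink c sink p \<and> fst a < c)"

text \<open>State of a packet: the cell it has just entered and its current direction.
  One step: the packet processes the arrow (if of its color) in the cell it
  has entered, then moves to the next cell.\<close>
definition step :: "(int \<times> int \<Rightarrow> (nat \<times> dir) option) \<Rightarrow> nat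
    \<Rightarrow> (int \<times> int) \<times> dir \<Rightarrow> (int \<times> int) \<times> dir" where
  "step arr col s =
     (let p = fst s;
          d' = (case arr p of Some (k, e) \<Rightarrow> if k = col then e else snd s | None \<Rightarrow> snd s)
      in ((fst p + fst (delta d'), snd p + snd (delta d')), d'))"

definition succeeds :: "nat \<Rightarrow> nat \<Rightarrow> nat \<Rightarrow> (nat \<Rightarrow> int \<times> int)
    \<Rightarrow> (int \<times> int \<Rightarrow> (nat \<times> dir) option) \<Rightarrow> nat \<Rightarrow> (int \<times> int) \<times> dir \<Rightarrow> bool" where
  "succeeds m n c sink arr col s0 \<longleftrightarrow>
     (\<exists>t. fst ((step arr col ^^ t) s0) = sink col \<and>
          (\<forall>u<t. in_grid m n (fst ((step arr col ^^ u) s0))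
                 \<and> \<not> is_sink c sink (fst ((step arr col ^^ u) s0))))"

definition entries :: "nat \<Rightarrow> nat \<Rightarrow> ((int \<times> int) \<times> dir) set" where
  "entries m n =
     {((int i, 0), East) | i. i < m} \<union> {((int i, int n - 1), West) | i. i < m}
   \<union> {((0, int j), South) | j. j < n} \<union> {((int m - 1, int j), North) | j. j < n}"

definition perfect :: "nat \<Rightarrow> nat \<Rightarrow> nat \<Rightarrow> (nat \<Rightarrow> int \<times> int)
    \<Rightarrow> (int \<times> int \<Rightarrow> (nat \<times> dir) option) \<Rightarrow> bool" where
  "perfect m n c sink arr \<longleftrightarrow> layout m n c sink arr \<and>
     (\<forall>col<c. \<forall>s\<in>entries m n. succeeds m n c sink arr col s)"

end

theory Submission
  imports Defs
begin

definition mvi :: "int \<times> int \<Rightarrow> dir \<Rightarrow> int \<Rightarrow> int \<times> int" where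
  "mvi p d j = (fst p + j * fst (delta d), snd p + j * snd (delta d))"

fun opp :: "dir \<Rightarrow> dir" where
  "opp North = South" | "opp South = North" | "opp East = West" | "opp West = East"

lemma delta_opp: "delta (opp d) = (- fst (delta d), - snd (delta d))"
  by (cases d) auto

definition wit :: "nat \<Rightarrow> nat \<Rightarrow> nat \<Rightarrow> (nat \<Rightarrow> int \<times> int) \<Rightarrow> (int \<times> int \<Rightarrow> (nat \<times> dir) option) \<Rightarrow> nat \<Rightarrow> int \<times> int \<Rightarrow> dir \<Rightarrow> int \<Rightarrow> bool" where
  "wit m n c sink arr i p d k \<longleftrightarrow> 0 \<le> k \<and> in_grid m n (mvi p d k) \<and>
     (\<exists>e. e \<noteq> d \<and> arr (mvi p d k) = Some (i,e)) \<and>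
     (\<forall>j. 0 \<le> j \<and> j < k \<longrightarrow> in_grid m n (mvi p d j) \<and> \<not> is_sink c sink (mvi p d j)
         \<and> (\<forall>e. arr (mvi p d j) = Some (i,e) \<longrightarrow> e = d))"

lemma step_nt: "(\<forall>e. arr q = Some (col,e) \<longrightarrow> e = d) \<Longrightarrow>
   step arr col (q,d) = ((fst q + fst (delta d), snd q + snd (delta d)), d)"
  by (auto simp: step_def split: option.split)

lemma step_arrow: "arr q = Some (col,e) \<Longrightarrow>
   step arr col (q,f) = ((fst q + fst (delta e), snd q + snd (delta e)), e)"
  by (auto simp: step_def)

lemma step_other: "(\<forall>e. arr q \<noteq> Some (col,e)) \<Longrightarrow>
   step arr col (q,f) = ((fst q + fst (delta f), snd q + snd (delta f)), f)"
  by (auto simp: step_def split: option.split)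

lemma mvi_succ: "(fst (mvi p d j) + fst (delta d), snd (mvi p d j) + snd (delta d)) = mvi p d (j+1)"
  by (simp add: mvi_def algebra_simps)

lemma mvi_pred: "(fst (mvi p d j) + fst (delta (opp d)), snd (mvi p d j) + snd (delta (opp d))) = mvi p d (j-1)"
  by (simp add: mvi_def delta_opp algebra_simps)

lemma mvi_0[simp]: "mvi p d 0 = p" by (simp add: mvi_def)

lemma straight:
  assumes "\<forall>j<k. \<forall>e. arr (mvi p d (int j)) = Some (col,e) \<longrightarrow> e = d"
  shows "(step arr col ^^ k) (p,d) = (mvi p d (int k), d)"
  using assms
proof (induction k)
  case 0 then show ?case by simp
next
  case (Suc k)
  have "(step arr col ^^ k) (p,d) = (mvi p d (int k), d)" using Suc.IH Suc.prems less_SucI by blast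
  moreover have "\<forall>e. arr (mvi p d (int k)) = Some (col,e) \<longrightarrow> e = d" using Suc.prems by auto
  ultimately show ?case by (simp add: step_nt mvi_def algebra_simps)
qed

lemma delta_ne: "delta d \<noteq> (0,0)" by (cases d) auto

lemma mvi_inj: "mvi p d j = mvi p d j' \<Longrightarrow> j = j'"
  by (cases d) (auto simp: mvi_def)


lemma first:
  assumes lay: "layout m n c sink arr" and succ: "succeeds m n c sink arr i (p,d)"
  shows "(\<exists>k. wit m n c sink arr i p d k) \<or>
         (\<exists>k. 0 \<le> k \<and> sink i = mvi p d k \<and>
              (\<forall>j. 0 \<le> j \<and> j < k \<longrightarrow> \<not> is_sink c sink (mvi p d j) \<and> in_grid m n (mvi p d j)))"
proof -
  obtain t where t1: "fst ((step arr i ^^ t) (p,d)) = sink i" and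
    t2: "\<forall>u<t. in_grid m n (fst ((step arr i ^^ u) (p,d))) \<and> \<not> is_sink c sink (fst ((step arr i ^^ u) (p,d)))"
    using succ unfolding succeeds_def by blast
  define T where "T j \<longleftrightarrow> mvi p d (int j) = sink i \<or> (\<exists>e. e\<noteq>d \<and> arr (mvi p d (int j)) = Some(i,e))" for j :: nat
  have ex: "\<exists>j\<le>t. T j"
  proof (rule ccontr)
    assume "\<not> (\<exists>j\<le>t. T j)"
    then have "\<forall>j<t. \<forall>e. arr (mvi p d (int j)) = Some (i,e) \<longrightarrow> e = d" unfolding T_def by (meson less_imp_le)
    then have "(step arr i ^^ t) (p,d) = (mvi p d (int t), d)" by (rule straight)
    with t1 have "T t" unfolding T_def by simp
    with \<open>\<not> (\<exists>j\<le>t. T j)\<close> show False by auto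
  qed
  define k where "k = (LEAST j. T j)"
  have Tk: "T k" unfolding k_def using ex by (meson LeastI)
  have kt: "k \<le> t" unfolding k_def using ex by (meson Least_le order_trans)
  have nT: "\<forall>j<k. \<not> T j" unfolding k_def using not_less_Least by blast
  have pre: "in_grid m n (mvi p d (int j)) \<and> \<not> is_sink c sink (mvi p d (int j))" if "j < k" for j
  proof -
    have "\<forall>j'<j. \<forall>e. arr (mvi p d (int j')) = Some (i,e) \<longrightarrow> e = d" using nT that unfolding T_def by (meson order.strict_trans)
    then have "(step arr i ^^ j) (p,d) = (mvi p d (int j), d)" by (rule straight)
    moreover have "j < t" using that kt by simp
    ultimately show ?thesis using t2 by force
  qed
  have pre': "in_grid m n (mvi p d j) \<and> \<not> is_sink c sink (mvi p d j)" if "0 \<le> j" "j < int k" for j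
    using pre[of "nat j"] that by simp
  have nt': "\<forall>e. arr (mvi p d j) = Some (i,e) \<longrightarrow> e = d" if "0 \<le> j" "j < int k" for j
  proof -
    have "nat j < k" using that by simp
    then have "\<not> T (nat j)" using nT by blast
    then show ?thesis using that unfolding T_def by auto
  qed
  show ?thesis
  proof (cases "mvi p d (int k) = sink i")
    case True
    then show ?thesis using pre' by (intro disjI2 exI[of _ "int k"]) auto
  next
    case False
    then obtain e where e: "e \<noteq> d" "arr (mvi p d (int k)) = Some (i,e)" using Tk unfolding T_def by auto
    then have "in_grid m n (mvi p d (int k))" using lay unfolding layout_def by blast
    then show ?thesis using e pre' nt' unfolding wit_def by (intro disjI1 exI[of _ "int k"]) auto
  qed
qed


lemma bounce_step:
  assumes w: "wit m n c sink arr i p d k" and out: "\<not> in_grid m n (mvi p d (-1))"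
    and ar: "arr (mvi p d k) = Some (i, opp d)"
    and G: "(\<exists>j. -1 \<le> j \<and> j < k \<and> s = (mvi p d j, opp d)) \<or> (\<exists>j. 0 \<le> j \<and> j < k \<and> s = (mvi p d j, d)) \<or> fst s = mvi p d k"
    and ing: "in_grid m n (fst s)"
  shows "(\<exists>j. -1 \<le> j \<and> j < k \<and> step arr i s = (mvi p d j, opp d)) \<or> (\<exists>j. 0 \<le> j \<and> j < k \<and> step arr i s = (mvi p d j, d)) \<or> fst (step arr i s) = mvi p d k"
proof -
  have k0: "0 \<le> k" using w unfolding wit_def by simp
  have seg: "\<forall>e. arr (mvi p d j) = Some (i,e) \<longrightarrow> e = d" if "0 \<le> j" "j < k" for j
    using w that unfolding wit_def by blast
  from G show ?thesis
  proof (elim disjE exE conjE)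
    fix j assume j: "-1 \<le> j" "j < k" "s = (mvi p d j, opp d)"
    have "j \<noteq> -1" using ing out j by auto
    with j have j0: "0 \<le> j" by simp
    show ?thesis
    proof (cases "arr (mvi p d j) = Some (i,d)")
      case True
      then have "step arr i s = (mvi p d (j+1), d)" using j by (simp add: step_arrow mvi_succ)
      show ?thesis
      proof (cases "j+1 < k")
        case True
        then show ?thesis using \<open>step arr i s = (mvi p d (j+1), d)\<close> j0 by (intro disjI2 disjI1 exI[of _ "j+1"]) auto
      next
        case False
        then have "j+1 = k" using j by simp
        then show ?thesis using \<open>step arr i s = (mvi p d (j+1), d)\<close> by simp
      qed
    next
      case False
      then have "\<forall>e. arr (mvi p d j) \<noteq> Some (i,e)" using seg[OF j0 j(2)] by auto
      then have "step arr i s = (mvi p d (j-1), opp d)" using j by (simp add: step_other mvi_pred)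
      then show ?thesis using j j0 by (intro disjI1 exI[of _ "j-1"]) auto
    qed
  next
    fix j assume j: "0 \<le> j" "j < k" "s = (mvi p d j, d)"
    then have "step arr i s = (mvi p d (j+1), d)" using seg[OF j(1,2)] by (simp add: step_nt mvi_succ)
    show ?thesis
    proof (cases "j+1 < k")
      case True
      then show ?thesis using \<open>step arr i s = (mvi p d (j+1), d)\<close> j by (intro disjI2 disjI1 exI[of _ "j+1"]) auto
    next
      case False
      then have "j+1 = k" using j by simp
      then show ?thesis using \<open>step arr i s = (mvi p d (j+1), d)\<close> by simp
    qed
  next
    assume "fst s = mvi p d k"
    then obtain f where "s = (mvi p d k, f)" by (cases s) auto
    then have "step arr i s = (mvi p d (k-1), opp d)" using ar by (simp add: step_arrow mvi_pred)
    then show ?thesis using k0 by (intro disjI1 exI[of _ "k-1"]) auto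
  qed
qed

lemma bounce:
  assumes lay: "layout m n c sink arr" and bd: "board m n c sink" and ic: "i < c"
    and w: "wit m n c sink arr i p d k" and out: "\<not> in_grid m n (mvi p d (-1))"
    and ar: "arr (mvi p d k) = Some (i, opp d)"
    and pre: "\<forall>u<t. in_grid m n (fst ((step arr i ^^ u) (mvi p d k, f)))"
  shows "fst ((step arr i ^^ t) (mvi p d k, f)) \<noteq> sink i"
proof -
  define G where "G s \<longleftrightarrow> (\<exists>j. -1 \<le> j \<and> j < k \<and> s = (mvi p d j, opp d)) \<or> (\<exists>j. 0 \<le> j \<and> j < k \<and> s = (mvi p d j, d)) \<or> fst s = mvi p d k" for s
  have inv: "u \<le> t \<Longrightarrow> G ((step arr i ^^ u) (mvi p d k, f))" for u
  proof (induction u)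
    case 0 then show ?case unfolding G_def by simp
  next
    case (Suc u)
    then have "G ((step arr i ^^ u) (mvi p d k, f))" by simp
    moreover have "in_grid m n (fst ((step arr i ^^ u) (mvi p d k, f)))" using pre Suc.prems by simp
    ultimately show ?case unfolding G_def using bounce_step[OF w out ar] by simp
  qed
  have sg: "in_grid m n (sink i)" "is_sink c sink (sink i)" using bd ic unfolding board_def is_sink_def by auto
  have xns: "\<not> is_sink c sink (mvi p d k)" using lay ar unfolding layout_def by blast
  have seg: "in_grid m n (mvi p d j) \<and> \<not> is_sink c sink (mvi p d j)" if "0 \<le> j" "j < k" for j
    using w that unfolding wit_def by blast
  show ?thesis
  proof
    assume eq: "fst ((step arr i ^^ t) (mvi p d k, f)) = sink i"
    have "G ((step arr i ^^ t) (mvi p d k, f))" using inv by simp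
    then show False unfolding G_def
    proof (elim disjE exE conjE)
      fix j assume j: "-1 \<le> j" "j < k" "(step arr i ^^ t) (mvi p d k, f) = (mvi p d j, opp d)"
      show False
      proof (cases "j = -1")
        case True then show False using eq j sg out by auto
      next
        case False then show False using eq j sg seg[of j] by auto
      qed
    next
      fix j assume j: "0 \<le> j" "j < k" "(step arr i ^^ t) (mvi p d k, f) = (mvi p d j, d)"
      then show False using eq sg seg[of j] by auto
    next
      assume "fst ((step arr i ^^ t) (mvi p d k, f)) = mvi p d k"
      then show False using eq sg xns by auto
    qed
  qed
qed


lemma straight_wit:
  assumes w: "wit m n c sink arr i p d k" and "j \<le> nat k"
  shows "(step arr i ^^ j) (p,d) = (mvi p d (int j), d)"
proof (rule straight, intro allI impI)
  fix j' e assume "j' < j" "arr (mvi p d (int j')) = Some (i, e)"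
  then have "0 \<le> int j' \<and> int j' < k" using assms(2) by linarith
  then show "e = d" using w \<open>arr (mvi p d (int j')) = Some (i, e)\<close> unfolding wit_def by blast
qed

lemma coincide:
  assumes lay: "layout m n c sink arr" and bd: "board m n c sink" and ic: "i < c"
    and w1: "wit m n c sink arr i p1 d1 k1" and w2: "wit m n c sink arr i p2 d2 k2"
    and o1: "\<not> in_grid m n (mvi p1 d1 (-1))" and o2: "\<not> in_grid m n (mvi p2 d2 (-1))"
    and eq: "mvi p1 d1 k1 = mvi p2 d2 k2"
    and h: "d1 = East \<or> d1 = West" and v: "d2 = North \<or> d2 = South"
  shows "\<not> succeeds m n c sink arr i (p1,d1)"
proof
  assume succ: "succeeds m n c sink arr i (p1,d1)"
  define x where "x = mvi p1 d1 k1"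
  obtain e where e: "e \<noteq> d1" "arr x = Some (i,e)" using w1 unfolding wit_def x_def by blast
  obtain e' where e': "e' \<noteq> d2" "arr x = Some (i,e')" using w2 unfolding wit_def x_def eq by blast
  have "e' = e" using e e' by simp
  then have ee: "e = opp d1 \<or> e = opp d2" using e e' h v by (cases e; auto)
  have k10: "0 \<le> k1" using w1 unfolding wit_def by simp
  obtain t where t1: "fst ((step arr i ^^ t) (p1,d1)) = sink i" and
    t2: "\<forall>u<t. in_grid m n (fst ((step arr i ^^ u) (p1,d1))) \<and> \<not> is_sink c sink (fst ((step arr i ^^ u) (p1,d1)))"
    using succ unfolding succeeds_def by blast
  have sg: "is_sink c sink (sink i)" using ic unfolding is_sink_def by auto
  have xns: "\<not> is_sink c sink x" using lay e unfolding layout_def by blast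
  show False
  proof (cases "t \<le> nat k1")
    case True
    then have st: "(step arr i ^^ t) (p1,d1) = (mvi p1 d1 (int t), d1)" by (rule straight_wit[OF w1])
    show False
    proof (cases "int t < k1")
      case True
      then have "\<not> is_sink c sink (mvi p1 d1 (int t))" using w1 unfolding wit_def by auto
      then show False using st t1 sg by auto
    next
      case False
      then have "int t = k1" using \<open>t \<le> nat k1\<close> k10 by linarith
      then show False using st t1 sg xns unfolding x_def by auto
    qed
  next
    case False
    define t' where "t' = t - nat k1"
    have tt: "t = t' + nat k1" using False unfolding t'_def by simp
    have sk: "(step arr i ^^ nat k1) (p1,d1) = (x, d1)" using straight_wit[OF w1, of "nat k1"] k10 unfolding x_def by simp
    have comp: "(step arr i ^^ (u + nat k1)) (p1,d1) = (step arr i ^^ u) (x,d1)" for u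
      by (simp add: funpow_add sk)
    have pre: "\<forall>u<t'. in_grid m n (fst ((step arr i ^^ u) (x, d1)))"
      using t2 comp tt by (metis add_less_cancel_right)
    have fin: "fst ((step arr i ^^ t') (x, d1)) = sink i" using t1 comp tt by metis
    from ee show False
    proof
      assume "e = opp d1"
      then show False using bounce[OF lay bd ic w1 o1, of "t'" d1] e pre fin unfolding x_def by simp
    next
      assume "e = opp d2"
      then show False using bounce[OF lay bd ic w2 o2, of "t'" d1] e pre fin unfolding x_def eq by simp
    qed
  qed
qed


definition tr :: "int \<times> int \<Rightarrow> int \<times> int" where "tr x = (snd x, fst x)"

fun trd :: "dir \<Rightarrow> dir" where
  "trd North = West" | "trd West = North" | "trd South = East" | "trd East = South"

definition arrT :: "(int \<times> int \<Rightarrow> (nat \<times> dir) option) \<Rightarrow> int \<times> int \<Rightarrow> (nat \<times> dir) option" where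
  "arrT arr x = map_option (\<lambda>(k,e). (k, trd e)) (arr (tr x))"

definition sinkT :: "(nat \<Rightarrow> int \<times> int) \<Rightarrow> nat \<Rightarrow> int \<times> int" where
  "sinkT sink k = tr (sink k)"

definition trs :: "(int \<times> int) \<times> dir \<Rightarrow> (int \<times> int) \<times> dir" where
  "trs s = (tr (fst s), trd (snd s))"

lemma tr_tr[simp]: "tr (tr x) = x" by (simp add: tr_def)
lemma trd_trd[simp]: "trd (trd d) = d" by (cases d) auto
lemma tr_eq[simp]: "tr x = tr y \<longleftrightarrow> x = y" by (metis tr_tr)
lemma trd_eq[simp]: "trd a = trd b \<longleftrightarrow> a = b" by (metis trd_trd)
lemma delta_trd: "delta (trd d) = tr (delta d)" by (cases d) (auto simp: tr_def)

lemma in_grid_tr[simp]: "in_grid n m (tr x) = in_grid m n x"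
  by (auto simp: in_grid_def tr_def)

lemma is_sink_tr[simp]: "is_sink c (sinkT sink) (tr x) = is_sink c sink x"
  by (auto simp: is_sink_def sinkT_def)

lemma arrT_tr: "arrT arr (tr x) = map_option (\<lambda>(k,e). (k, trd e)) (arr x)"
  by (simp add: arrT_def)

lemma arrT_Some: "arrT arr (tr x) = Some (i, e') \<longleftrightarrow> (\<exists>e. arr x = Some (i,e) \<and> e' = trd e)"
  by (auto simp: arrT_tr)

lemma step_tr: "step (arrT arr) col (trs s) = trs (step arr col s)"
proof -
  obtain p d where s: "s = (p,d)" by (cases s)
  show ?thesis
  proof (cases "arr p")
    case None
    then have "arrT arr (tr p) = None" by (simp add: arrT_tr)
    then show ?thesis using s None by (simp add: step_def trs_def delta_trd Let_def) (simp add: tr_def)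
  next
    case (Some a)
    then obtain k e where "a = (k,e)" by (cases a)
    then have "arrT arr (tr p) = Some (k, trd e)" using Some by (simp add: arrT_tr)
    then show ?thesis using s Some \<open>a = (k,e)\<close> by (simp add: step_def trs_def delta_trd Let_def) (simp add: tr_def)
  qed
qed

lemma funpow_tr: "(step (arrT arr) col ^^ t) (trs s) = trs ((step arr col ^^ t) s)"
  by (induction t) (simp_all add: step_tr)

lemma fst_trs[simp]: "fst (trs s) = tr (fst s)" by (simp add: trs_def)

lemma succeeds_tr: "succeeds n m c (sinkT sink) (arrT arr) col (trs s) = succeeds m n c sink arr col s"
  unfolding succeeds_def funpow_tr fst_trs by (simp add: sinkT_def)

lemma mvi_tr: "mvi (tr p) (trd d) j = tr (mvi p d j)"
  by (simp add: mvi_def delta_trd tr_def)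

lemma wit_tr: "wit n m c (sinkT sink) (arrT arr) i (tr p) (trd d) k = wit m n c sink arr i p d k"
  unfolding wit_def mvi_tr in_grid_tr is_sink_tr arrT_Some
  by (smt (verit, ccfv_threshold) trd_trd)

lemma layout_tr: "layout m n c sink arr \<Longrightarrow> layout n m c (sinkT sink) (arrT arr)"
  unfolding layout_def
proof (intro allI impI)
  fix p a assume h: "\<forall>p a. arr p = Some a \<longrightarrow> in_grid m n p \<and> \<not> is_sink c sink p \<and> fst a < c"
    and a: "arrT arr p = Some a"
  obtain i e where "a = (i,e)" by (cases a)
  with a obtain e0 where "arr (tr p) = Some (i,e0)" using arrT_Some[of arr "tr p"] by auto
  then show "in_grid n m p \<and> \<not> is_sink c (sinkT sink) p \<and> fst a < c"
    using h \<open>a = (i,e)\<close> by (metis fst_conv in_grid_tr is_sink_tr tr_tr)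
qed

lemma board_tr: "board m n c sink \<Longrightarrow> board n m c (sinkT sink)"
  unfolding board_def inj_on_def sinkT_def by (metis in_grid_tr tr_eq)


lemma wit_ns:
  assumes lay: "layout m n c sink arr" and w: "wit m n c sink arr i p d k" and "0 \<le> j" "j \<le> k"
  shows "\<not> is_sink c sink (mvi p d j)"
proof (cases "j = k")
  case True
  then show ?thesis using w lay unfolding wit_def layout_def by blast
next
  case False
  then show ?thesis using w assms(3,4) unfolding wit_def by auto
qed

lemma atmost1:
  assumes lay: "layout m n c sink arr" and bd: "board m n c sink"
    and succ: "\<forall>i<c. succeeds m n c sink arr i (p,d)"
  shows "card {i\<in>{..<c}. \<not> (\<exists>k. wit m n c sink arr i p d k)} \<le> 1"
proof -
  let ?S = "{i\<in>{..<c}. \<not> (\<exists>k. wit m n c sink arr i p d k)}"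
  have sk: "\<exists>k. 0 \<le> k \<and> sink i = mvi p d k \<and> (\<forall>j. 0 \<le> j \<and> j < k \<longrightarrow> \<not> is_sink c sink (mvi p d j))"
    if "i \<in> ?S" for i
    using first[OF lay, of i p d] succ that by blast
  have "i = i'" if iS: "i \<in> ?S" "i' \<in> ?S" for i i'
  proof -
    obtain k where k: "0 \<le> k" "sink i = mvi p d k" "\<forall>j. 0 \<le> j \<and> j < k \<longrightarrow> \<not> is_sink c sink (mvi p d j)"
      using sk[OF iS(1)] by blast
    obtain k' where k': "0 \<le> k'" "sink i' = mvi p d k'" "\<forall>j. 0 \<le> j \<and> j < k' \<longrightarrow> \<not> is_sink c sink (mvi p d j)"
      using sk[OF iS(2)] by blast
    have ic: "i < c" "i' < c" using iS by auto
    have "is_sink c sink (sink i)" "is_sink c sink (sink i')" using ic unfolding is_sink_def by auto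
    then have "\<not> k < k'" "\<not> k' < k" using k k' by auto
    then have "sink i = sink i'" using k k' by simp
    then show "i = i'" using bd ic unfolding board_def inj_on_def by blast
  qed
  moreover have "finite ?S" by simp
  ultimately show ?thesis using card_le_Suc0_iff_eq[of ?S] by simp
qed


lemma mvi_East[simp]: "mvi (a,b) East k = (a, b+k)" by (simp add: mvi_def)
lemma mvi_West[simp]: "mvi (a,b) West k = (a, b-k)" by (simp add: mvi_def)
lemma mvi_South[simp]: "mvi (a,b) South k = (a+k, b)" by (simp add: mvi_def)
lemma mvi_North[simp]: "mvi (a,b) North k = (a-k, b)" by (simp add: mvi_def)

definition RWr :: "nat \<Rightarrow> nat \<Rightarrow> nat \<Rightarrow> (nat \<Rightarrow> int \<times> int) \<Rightarrow> (int \<times> int \<Rightarrow> (nat \<times> dir) option) \<Rightarrow> nat \<Rightarrow> int \<Rightarrow> (int \<times> int) set" where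
  "RWr m n c sink arr i r = {x. \<exists>k. (wit m n c sink arr i (r,0) East k \<and> x = mvi (r,0) East k)
       \<or> (wit m n c sink arr i (r, int n - 1) West k \<and> x = mvi (r, int n - 1) West k)}"

definition RW :: "nat \<Rightarrow> nat \<Rightarrow> nat \<Rightarrow> (nat \<Rightarrow> int \<times> int) \<Rightarrow> (int \<times> int \<Rightarrow> (nat \<times> dir) option) \<Rightarrow> nat \<Rightarrow> (int \<times> int) set" where
  "RW m n c sink arr i = (\<Union>r\<in>{0..<int m}. RWr m n c sink arr i r)"

lemma grid_eq: "{x. in_grid m n x} = {0..<int m} \<times> {0..<int n}"
  by (auto simp: in_grid_def)

lemma finite_grid: "finite {x. in_grid m n x}"
  unfolding grid_eq by simp

lemma RWr_sub: "RWr m n c sink arr i r \<subseteq> {x. in_grid m n x \<and> fst x = r}"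
  unfolding RWr_def wit_def by auto

lemma RWr_arrow: "x \<in> RWr m n c sink arr i r \<Longrightarrow> in_grid m n x \<and> (\<exists>e. arr x = Some (i,e))"
  unfolding RWr_def wit_def by auto

lemma finite_RWr: "finite (RWr m n c sink arr i r)"
  by (rule finite_subset[OF RWr_sub]) (use finite_grid in \<open>auto intro: finite_subset\<close>)

lemma row_distinct:
  assumes lay: "layout m n c sink arr" and bd: "board m n c sink"
    and occ: "r \<in> fst ` sink ` {..<c}"
    and w1: "wit m n c sink arr i (r,0) East k1" and w2: "wit m n c sink arr i (r, int n - 1) West k2"
  shows "mvi (r,0) East k1 \<noteq> mvi (r, int n - 1) West k2"
proof -
  obtain j where j: "j < c" "fst (sink j) = r" using occ by auto
  obtain z where z: "sink j = (r,z)" using j by (metis prod.collapse)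
  have "in_grid m n (sink j)" using bd j unfolding board_def by blast
  then have zg: "0 \<le> z" "z < int n" using z unfolding in_grid_def by auto
  have sj: "is_sink c sink (r,z)" using j z unfolding is_sink_def by auto
  have "k1 < z"
  proof (rule ccontr)
    assume "\<not> k1 < z"
    then have "\<not> is_sink c sink (mvi (r,0) East z)" using wit_ns[OF lay w1, of z] zg by simp
    then show False using sj by simp
  qed
  moreover have "k2 < int n - 1 - z"
  proof (rule ccontr)
    assume "\<not> k2 < int n - 1 - z"
    then have "\<not> is_sink c sink (mvi (r, int n - 1) West (int n - 1 - z))" using wit_ns[OF lay w2, of "int n - 1 - z"] zg by simp
    then show False using sj by simp
  qed
  ultimately show ?thesis by simp
qed


lemma card_split: "finite A \<Longrightarrow> card (A \<inter> {x. P x}) + card {x\<in>A. \<not> P x} = card A"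
proof -
  assume f: "finite A"
  have "A = (A \<inter> {x. P x}) \<union> {x\<in>A. \<not> P x}" by auto
  moreover have "(A \<inter> {x. P x}) \<inter> {x\<in>A. \<not> P x} = {}" by auto
  ultimately show ?thesis using f by (metis card_Un_disjoint finite_Un)
qed

lemma card_RWr:
  assumes lay: "layout m n c sink arr" and bd: "board m n c sink" and ic: "i < c"
    and sL: "succeeds m n c sink arr i ((r,0),East)"
    and sR: "succeeds m n c sink arr i ((r,int n - 1),West)"
  shows "int (card (RWr m n c sink arr i r)) \<ge>
     (if r \<in> fst ` sink ` {..<c} then of_bool (\<exists>k. wit m n c sink arr i (r,0) East k)
        + of_bool (\<exists>k. wit m n c sink arr i (r,int n - 1) West k) else 1)"
proof (cases "r \<in> fst ` sink ` {..<c}")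
  case False
  have "\<exists>k. wit m n c sink arr i (r,0) East k"
  proof (rule ccontr)
    assume "\<not> (\<exists>k. wit m n c sink arr i (r,0) East k)"
    then obtain k where "sink i = mvi (r,0) East k" using first[OF lay sL] by blast
    then have "fst (sink i) = r" by simp
    then show False using False ic by auto
  qed
  then obtain k where "mvi (r,0) East k \<in> RWr m n c sink arr i r" unfolding RWr_def by blast
  then have "card (RWr m n c sink arr i r) \<ge> 1"
    using finite_RWr by (metis One_nat_def Suc_leI card_gt_0_iff empty_iff)
  then show ?thesis using False by simp
next
  case True
  let ?a = "\<exists>k. wit m n c sink arr i (r,0) East k"
  let ?b = "\<exists>k. wit m n c sink arr i (r,int n - 1) West k"
  have fin: "finite (RWr m n c sink arr i r)" by (rule finite_RWr)
  have "card (RWr m n c sink arr i r) \<ge> of_bool ?a + of_bool ?b"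
  proof (cases ?a)
    case a: True
    then obtain k1 where k1: "wit m n c sink arr i (r,0) East k1" by blast
    have m1: "mvi (r,0) East k1 \<in> RWr m n c sink arr i r" using k1 unfolding RWr_def by blast
    show ?thesis
    proof (cases ?b)
      case True
      then obtain k2 where k2: "wit m n c sink arr i (r,int n - 1) West k2" by blast
      have m2: "mvi (r,int n - 1) West k2 \<in> RWr m n c sink arr i r" using k2 unfolding RWr_def by blast
      have ne: "mvi (r,0) East k1 \<noteq> mvi (r, int n - 1) West k2" by (rule row_distinct[OF lay bd \<open>r \<in> _\<close> k1 k2])
      have "card {mvi (r,0) East k1, mvi (r, int n - 1) West k2} \<le> card (RWr m n c sink arr i r)"
        using m1 m2 fin by (intro card_mono) auto
      then show ?thesis using ne a True by simp
    next
      case False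
      have "card (RWr m n c sink arr i r) \<ge> 1" using m1 fin by (metis One_nat_def Suc_leI card_gt_0_iff empty_iff)
      then show ?thesis using a False by simp
    qed
  next
    case a: False
    show ?thesis
    proof (cases ?b)
      case True
      then obtain k2 where k2: "wit m n c sink arr i (r,int n - 1) West k2" by blast
      have m2: "mvi (r,int n - 1) West k2 \<in> RWr m n c sink arr i r" using k2 unfolding RWr_def by blast
      have "card (RWr m n c sink arr i r) \<ge> 1" using m2 fin by (metis One_nat_def Suc_leI card_gt_0_iff empty_iff)
      then show ?thesis using a True by simp
    next
      case False then show ?thesis using a by simp
    qed
  qed
  then have "int (card (RWr m n c sink arr i r)) \<ge> int (of_bool ?a + of_bool ?b)" by linarith
  then show ?thesis using True by (cases ?a; cases ?b; auto)
qed


lemma card_RW: "card (RW m n c sink arr i) = (\<Sum>r\<in>{0..<int m}. card (RWr m n c sink arr i r))"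
  unfolding RW_def
proof (rule card_UN_disjoint)
  show "finite {0..<int m}" by simp
  show "\<forall>r\<in>{0..<int m}. finite (RWr m n c sink arr i r)" using finite_RWr[of m n c sink arr i] by blast
  show "\<forall>r\<in>{0..<int m}. \<forall>r'\<in>{0..<int m}. r \<noteq> r' \<longrightarrow> RWr m n c sink arr i r \<inter> RWr m n c sink arr i r' = {}"
  proof (intro ballI impI)
    fix r r' :: int assume "r \<noteq> r'"
    then show "RWr m n c sink arr i r \<inter> RWr m n c sink arr i r' = {}"
      using RWr_sub[of m n c sink arr i r] RWr_sub[of m n c sink arr i r'] by auto
  qed
qed

lemma row_sum:
  assumes lay: "layout m n c sink arr" and bd: "board m n c sink"
    and sL: "\<forall>i<c. succeeds m n c sink arr i ((r,0),East)"
    and sR: "\<forall>i<c. succeeds m n c sink arr i ((r,int n - 1),West)"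
  shows "(\<Sum>i<c. int (card (RWr m n c sink arr i r))) \<ge>
           (if r \<in> fst ` sink ` {..<c} then 2 * int c - 2 else int c)"
proof -
  let ?a = "\<lambda>i. \<exists>k. wit m n c sink arr i (r,0) East k"
  let ?b = "\<lambda>i. \<exists>k. wit m n c sink arr i (r,int n - 1) West k"
  have each: "int (card (RWr m n c sink arr i r)) \<ge>
     (if r \<in> fst ` sink ` {..<c} then of_bool (?a i) + of_bool (?b i) else 1)" if "i \<in> {..<c}" for i
  proof -
    have ic: "i < c" using that by simp
    show ?thesis by (rule card_RWr[OF lay bd ic]) (use sL sR ic in blast)+
  qed
  show ?thesis
  proof (cases "r \<in> fst ` sink ` {..<c}")
    case False
    then have "(\<Sum>i<c. int (card (RWr m n c sink arr i r))) \<ge> (\<Sum>i<c. 1)"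
      using each by (intro sum_mono) (simp only: if_False)
    then show ?thesis using False by simp
  next
    case True
    then have "(\<Sum>i<c. int (card (RWr m n c sink arr i r))) \<ge> (\<Sum>i<c. of_bool (?a i) + of_bool (?b i))"
      using each by (intro sum_mono) (simp only: if_True)
    also have "(\<Sum>i<c. of_bool (?a i) + of_bool (?b i)) =
        int (card ({..<c} \<inter> {i. ?a i})) + int (card ({..<c} \<inter> {i. ?b i}))"
    proof -
      have e1: "(\<Sum>i<c. (of_bool (?a i))::int) = int (card ({..<c} \<inter> {i. ?a i}))"
        by (rule sum_of_bool_eq) simp_all
      have e2: "(\<Sum>i<c. (of_bool (?b i))::int) = int (card ({..<c} \<inter> {i. ?b i}))"
        by (rule sum_of_bool_eq) simp_all
      show ?thesis by (simp only: sum.distrib e1 e2)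
    qed
    finally have s: "(\<Sum>i<c. int (card (RWr m n c sink arr i r))) \<ge>
        int (card ({..<c} \<inter> {i. ?a i})) + int (card ({..<c} \<inter> {i. ?b i}))" .
    have a1: "card {i\<in>{..<c}. \<not> ?a i} \<le> 1" by (rule atmost1[OF lay bd sL])
    have b1: "card {i\<in>{..<c}. \<not> ?b i} \<le> 1" by (rule atmost1[OF lay bd sR])
    have a2: "card ({..<c} \<inter> {i. ?a i}) + card {i\<in>{..<c}. \<not> ?a i} = card {..<c}"
      by (rule card_split) (rule finite_lessThan)
    have b2: "card ({..<c} \<inter> {i. ?b i}) + card {i\<in>{..<c}. \<not> ?b i} = card {..<c}"
      by (rule card_split) (rule finite_lessThan)
    have a3: "int (card ({..<c} \<inter> {i. ?a i})) + int (card {i\<in>{..<c}. \<not> ?a i}) = int c"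
      by (simp only: of_nat_add[symmetric] a2 card_lessThan)
    have b3: "int (card ({..<c} \<inter> {i. ?b i})) + int (card {i\<in>{..<c}. \<not> ?b i}) = int c"
      by (simp only: of_nat_add[symmetric] b2 card_lessThan)
    have "int (card {i\<in>{..<c}. \<not> ?a i}) \<le> 1" "int (card {i\<in>{..<c}. \<not> ?b i}) \<le> 1" using a1 b1 by linarith+
    then show ?thesis unfolding if_P[OF True] using s a3 b3 by linarith
  qed
qed


lemma sum_if_O:
  fixes a b :: int
  assumes R: "finite R" and Qs: "Q \<subseteq> R"
  shows "(\<Sum>r\<in>R. (if r \<in> Q then a else b)) = a * int (card Q) + b * (int (card R) - int (card Q))"
proof -
  have fQ: "finite Q" using Qs R by (rule finite_subset)
  have e1: "R \<inter> {r. r \<in> Q} = Q" using Qs by auto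
  have e2: "R \<inter> - {r. r \<in> Q} = R - Q" by auto
  have c2: "card (R - Q) = card R - card Q" using card_Diff_subset[OF fQ Qs] .
  have le: "card Q \<le> card R" using card_mono[OF R Qs] .
  have "(\<Sum>r\<in>R. (if r \<in> Q then a else b)) = (\<Sum>r\<in>Q. a) + (\<Sum>r\<in>R - Q. b)"
    using sum.If_cases[OF R, of "\<lambda>r. r \<in> Q" "\<lambda>_. a" "\<lambda>_. b"] e1 e2 by simp
  also have "\<dots> = a * int (card Q) + b * (int (card R) - int (card Q))"
    using c2 le by (simp add: of_nat_diff mult.commute)
  finally show ?thesis .
qed

lemma rows:
  assumes lay: "layout m n c sink arr" and bd: "board m n c sink"
    and sL: "\<forall>i<c. \<forall>r. 0 \<le> r \<and> r < int m \<longrightarrow> succeeds m n c sink arr i ((r,0),East)"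
    and sR: "\<forall>i<c. \<forall>r. 0 \<le> r \<and> r < int m \<longrightarrow> succeeds m n c sink arr i ((r,int n - 1),West)"
  shows "int c * int m + (int c - 2) * int (card (fst ` sink ` {..<c}))
           \<le> (\<Sum>i<c. int (card (RW m n c sink arr i)))"
proof -
  let ?O = "fst ` sink ` {..<c}"
  let ?R = "{0..<int m}"
  have OR: "?O \<subseteq> ?R" using bd unfolding board_def in_grid_def by auto
  have "(\<Sum>r\<in>?R. (if r \<in> ?O then 2 * int c - 2 else int c))
        \<le> (\<Sum>r\<in>?R. \<Sum>i<c. int (card (RWr m n c sink arr i r)))"
  proof (rule sum_mono)
    fix r assume "r \<in> ?R"
    then show "(if r \<in> ?O then 2 * int c - 2 else int c) \<le> (\<Sum>i<c. int (card (RWr m n c sink arr i r)))"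
      using row_sum[OF lay bd] sL sR by simp
  qed
  also have "\<dots> = (\<Sum>i<c. \<Sum>r\<in>?R. int (card (RWr m n c sink arr i r)))"
    by (rule sum.swap)
  also have "\<dots> = (\<Sum>i<c. int (card (RW m n c sink arr i)))"
    by (simp only: card_RW of_nat_sum)
  finally have *: "(\<Sum>r\<in>?R. (if r \<in> ?O then 2 * int c - 2 else int c)) \<le> (\<Sum>i<c. int (card (RW m n c sink arr i)))" .
  have "(\<Sum>r\<in>?R. (if r \<in> ?O then 2 * int c - 2 else int c)) =
      (2 * int c - 2) * int (card ?O) + int c * (int (card ?R) - int (card ?O))"
    by (rule sum_if_O[OF _ OR]) simp
  moreover have "card ?R = m" by simp
  ultimately have "(\<Sum>r\<in>?R. (if r \<in> ?O then 2 * int c - 2 else int c)) =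
      int c * int m + (int c - 2) * int (card ?O)" by (simp add: algebra_simps)
  then show ?thesis using * by simp
qed


lemma wit_trS: "wit n m c (sinkT sink) (arrT arr) i (s,0) East k = wit m n c sink arr i (0,s) South k"
  using wit_tr[of n m c sink arr i "(0,s)" South k] by (simp add: tr_def)

lemma wit_trN: "wit n m c (sinkT sink) (arrT arr) i (s,int m - 1) West k = wit m n c sink arr i (int m - 1,s) North k"
  using wit_tr[of n m c sink arr i "(int m - 1,s)" North k] by (simp add: tr_def)

lemma disj:
  assumes lay: "layout m n c sink arr" and bd: "board m n c sink" and ic: "i < c"
    and sL: "\<forall>i<c. \<forall>r. 0 \<le> r \<and> r < int m \<longrightarrow> succeeds m n c sink arr i ((r,0),East)"
    and sR: "\<forall>i<c. \<forall>r. 0 \<le> r \<and> r < int m \<longrightarrow> succeeds m n c sink arr i ((r,int n - 1),West)"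
  shows "RW m n c sink arr i \<inter> tr ` RW n m c (sinkT sink) (arrT arr) i = {}"
proof (rule ccontr)
  assume "RW m n c sink arr i \<inter> tr ` RW n m c (sinkT sink) (arrT arr) i \<noteq> {}"
  then obtain x r y s where r: "0 \<le> r" "r < int m" and xr: "x \<in> RWr m n c sink arr i r"
    and y: "y \<in> RWr n m c (sinkT sink) (arrT arr) i s" and xy: "x = tr y"
    unfolding RW_def by (auto simp: atLeastLessThan_iff)
  obtain k where xk: "(wit m n c sink arr i (r,0) East k \<and> x = mvi (r,0) East k)
       \<or> (wit m n c sink arr i (r, int n - 1) West k \<and> x = mvi (r, int n - 1) West k)"
    using xr unfolding RWr_def by blast
  obtain k' where yk: "(wit m n c sink arr i (0,s) South k' \<and> x = mvi (0,s) South k')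
       \<or> (wit m n c sink arr i (int m - 1, s) North k' \<and> x = mvi (int m - 1,s) North k')"
    using y xy unfolding RWr_def wit_trS wit_trN by (auto simp: tr_def) blast+
  have oE: "\<not> in_grid m n (mvi (r,0) East (-1))" by (simp add: in_grid_def)
  have oW: "\<not> in_grid m n (mvi (r,int n - 1) West (-1))" by (simp add: in_grid_def)
  have oS: "\<not> in_grid m n (mvi (0,s) South (-1))" by (simp add: in_grid_def)
  have oN: "\<not> in_grid m n (mvi (int m - 1,s) North (-1))" by (simp add: in_grid_def)
  have s1: "succeeds m n c sink arr i ((r,0),East)" using sL ic r by blast
  have s2: "succeeds m n c sink arr i ((r,int n - 1),West)" using sR ic r by blast
  from xk show False
  proof (elim disjE conjE)
    assume w1: "wit m n c sink arr i (r,0) East k" and x1: "x = mvi (r,0) East k"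
    from yk show False
    proof (elim disjE conjE)
      assume w2: "wit m n c sink arr i (0,s) South k'" and x2: "x = mvi (0,s) South k'"
      show False using coincide[OF lay bd ic w1 w2 oE oS] x1 x2 s1 by simp
    next
      assume w2: "wit m n c sink arr i (int m - 1,s) North k'" and x2: "x = mvi (int m - 1,s) North k'"
      show False using coincide[OF lay bd ic w1 w2 oE oN] x1 x2 s1 by simp
    qed
  next
    assume w1: "wit m n c sink arr i (r,int n - 1) West k" and x1: "x = mvi (r,int n - 1) West k"
    from yk show False
    proof (elim disjE conjE)
      assume w2: "wit m n c sink arr i (0,s) South k'" and x2: "x = mvi (0,s) South k'"
      show False using coincide[OF lay bd ic w1 w2 oW oS] x1 x2 s2 by simp
    next
      assume w2: "wit m n c sink arr i (int m - 1,s) North k'" and x2: "x = mvi (int m - 1,s) North k'"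
      show False using coincide[OF lay bd ic w1 w2 oW oN] x1 x2 s2 by simp
    qed
  qed
qed


theorem mainTheorem11:
  fixes m n c :: nat and sink :: "nat \<Rightarrow> int \<times> int"
    and arr :: "int \<times> int \<Rightarrow> (nat \<times> dir) option"
  assumes "c \<ge> 2"
    and "board m n c sink"
    and "perfect m n c sink arr"
  shows "int c * (int m + int n)
           + (int c - 2) * (int (card (fst ` sink ` {..<c})) + int (card (snd ` sink ` {..<c})))
         \<le> int m * int n - int c"
proof -
  note bd = assms(2)
  have lay: "layout m n c sink arr" and succ: "\<forall>col<c. \<forall>s\<in>entries m n. succeeds m n c sink arr col s"
    using assms(3) unfolding perfect_def by auto
  have sL: "\<forall>i<c. \<forall>r. 0 \<le> r \<and> r < int m \<longrightarrow> succeeds m n c sink arr i ((r,0),East)"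
  proof (intro allI impI)
    fix i r assume "i < c" "0 \<le> r \<and> r < int m"
    then have "((int (nat r), 0), East) \<in> entries m n" unfolding entries_def by (auto intro!: exI[of _ "nat r"])
    then show "succeeds m n c sink arr i ((r,0),East)" using succ \<open>i < c\<close> \<open>0 \<le> r \<and> r < int m\<close> by auto
  qed
  have sR: "\<forall>i<c. \<forall>r. 0 \<le> r \<and> r < int m \<longrightarrow> succeeds m n c sink arr i ((r,int n - 1),West)"
  proof (intro allI impI)
    fix i r assume "i < c" "0 \<le> r \<and> r < int m"
    then have "((int (nat r), int n - 1), West) \<in> entries m n" unfolding entries_def by (auto intro!: exI[of _ "nat r"])
    then show "succeeds m n c sink arr i ((r,int n - 1),West)" using succ \<open>i < c\<close> \<open>0 \<le> r \<and> r < int m\<close> by auto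
  qed
  have sL': "\<forall>i<c. \<forall>r. 0 \<le> r \<and> r < int n \<longrightarrow> succeeds n m c (sinkT sink) (arrT arr) i ((r,0),East)"
  proof (intro allI impI)
    fix i r assume "i < c" "0 \<le> r \<and> r < int n"
    then have "((0, int (nat r)), South) \<in> entries m n" unfolding entries_def by (auto intro!: exI[of _ "nat r"])
    then have "succeeds m n c sink arr i ((0,r),South)" using succ \<open>i < c\<close> \<open>0 \<le> r \<and> r < int n\<close> by auto
    then show "succeeds n m c (sinkT sink) (arrT arr) i ((r,0),East)"
      using succeeds_tr[of n m c sink arr i "((0,r),South)"] by (simp add: trs_def tr_def)
  qed
  have sR': "\<forall>i<c. \<forall>r. 0 \<le> r \<and> r < int n \<longrightarrow> succeeds n m c (sinkT sink) (arrT arr) i ((r,int m - 1),West)"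
  proof (intro allI impI)
    fix i r assume "i < c" "0 \<le> r \<and> r < int n"
    then have "((int m - 1, int (nat r)), North) \<in> entries m n" unfolding entries_def by (auto intro!: exI[of _ "nat r"])
    then have "succeeds m n c sink arr i ((int m - 1,r),North)" using succ \<open>i < c\<close> \<open>0 \<le> r \<and> r < int n\<close> by auto
    then show "succeeds n m c (sinkT sink) (arrT arr) i ((r,int m - 1),West)"
      using succeeds_tr[of n m c sink arr i "((int m - 1,r),North)"] by (simp add: trs_def tr_def)
  qed
  have lay': "layout n m c (sinkT sink) (arrT arr)" by (rule layout_tr[OF lay])
  have bd': "board n m c (sinkT sink)" by (rule board_tr[OF bd])
  have R1: "int c * int m + (int c - 2) * int (card (fst ` sink ` {..<c}))
           \<le> (\<Sum>i<c. int (card (RW m n c sink arr i)))" by (rule rows[OF lay bd sL sR])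
  have R2: "int c * int n + (int c - 2) * int (card (fst ` (sinkT sink) ` {..<c}))
           \<le> (\<Sum>i<c. int (card (RW n m c (sinkT sink) (arrT arr) i)))" by (rule rows[OF lay' bd' sL' sR'])
  have "fst ` (sinkT sink) ` {..<c} = snd ` sink ` {..<c}"
    unfolding image_image by (simp add: sinkT_def tr_def)
  then have R2': "int c * int n + (int c - 2) * int (card (snd ` sink ` {..<c}))
           \<le> (\<Sum>i<c. int (card (RW n m c (sinkT sink) (arrT arr) i)))" using R2 by simp
  define A where "A i = {x. in_grid m n x \<and> (\<exists>e. arr x = Some (i,e))}" for i
  have finA: "finite (A i)" for i unfolding A_def using finite_grid[of m n] by (rule finite_subset[rotated]) auto
  have per: "int (card (RW m n c sink arr i)) + int (card (RW n m c (sinkT sink) (arrT arr) i)) \<le> int (card (A i))"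
    if ic: "i < c" for i
  proof -
    let ?C = "tr ` RW n m c (sinkT sink) (arrT arr) i"
    have s1: "RW m n c sink arr i \<subseteq> A i" unfolding RW_def A_def using RWr_arrow by blast
    have s2: "?C \<subseteq> A i"
    proof
      fix x assume "x \<in> ?C"
      then obtain y s where y: "y \<in> RWr n m c (sinkT sink) (arrT arr) i s" "x = tr y" unfolding RW_def by auto
      then have "in_grid n m y" "\<exists>e. arrT arr y = Some (i,e)" using RWr_arrow by blast+
      then show "x \<in> A i" unfolding A_def using y(2) arrT_Some[of arr x i] by auto
    qed
    have cc: "card ?C = card (RW n m c (sinkT sink) (arrT arr) i)"
      by (rule card_image) (simp add: inj_on_def)
    have dj: "RW m n c sink arr i \<inter> ?C = {}" by (rule disj[OF lay bd ic sL sR])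
    have "card (RW m n c sink arr i \<union> ?C) = card (RW m n c sink arr i) + card ?C"
      by (rule card_Un_disjoint) (use finA s1 s2 dj in \<open>auto intro: finite_subset\<close>)
    moreover have "card (RW m n c sink arr i \<union> ?C) \<le> card (A i)"
      by (rule card_mono[OF finA]) (use s1 s2 in blast)
    ultimately show ?thesis using cc by linarith
  qed
  have cardU: "card (\<Union>i\<in>{..<c}. A i) = (\<Sum>i<c. card (A i))"
  proof (rule card_UN_disjoint)
    show "\<forall>i\<in>{..<c}. \<forall>j\<in>{..<c}. i \<noteq> j \<longrightarrow> A i \<inter> A j = {}" unfolding A_def by auto
  qed (auto simp: finA)
  have G: "card {x. in_grid m n x} = m * n"
    unfolding grid_eq by (simp add: card_cartesian_product)
  have SG: "sink ` {..<c} \<subseteq> {x. in_grid m n x}" using bd unfolding board_def by auto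
  have cS: "card (sink ` {..<c}) = c" using bd unfolding board_def by (simp add: card_image)
  have UG: "(\<Union>i\<in>{..<c}. A i) \<subseteq> {x. in_grid m n x} - sink ` {..<c}"
  proof
    fix x assume "x \<in> (\<Union>i\<in>{..<c}. A i)"
    then obtain i e where "in_grid m n x" "arr x = Some (i,e)" unfolding A_def by auto
    then have "\<not> is_sink c sink x" using lay unfolding layout_def by blast
    then show "x \<in> {x. in_grid m n x} - sink ` {..<c}" using \<open>in_grid m n x\<close> unfolding is_sink_def by auto
  qed
  have "card (\<Union>i\<in>{..<c}. A i) \<le> card ({x. in_grid m n x} - sink ` {..<c})"
    by (rule card_mono[OF _ UG]) (simp add: finite_grid)
  also have "\<dots> = m * n - c" using card_Diff_subset[OF _ SG] G cS finite_subset[OF SG finite_grid] by simp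
  finally have "(\<Sum>i<c. card (A i)) \<le> m * n - c" using cardU by simp
  moreover have "c \<le> m * n" using card_mono[OF finite_grid SG] G cS by simp
  ultimately have T: "(\<Sum>i<c. int (card (A i))) \<le> int m * int n - int c"
    by (metis of_nat_diff of_nat_le_iff of_nat_mult of_nat_sum)
  have "(\<Sum>i<c. int (card (RW m n c sink arr i)) + int (card (RW n m c (sinkT sink) (arrT arr) i)))
        \<le> (\<Sum>i<c. int (card (A i)))" using per by (intro sum_mono) auto
  then have "(\<Sum>i<c. int (card (RW m n c sink arr i))) + (\<Sum>i<c. int (card (RW n m c (sinkT sink) (arrT arr) i)))
        \<le> int m * int n - int c" using T by (simp add: sum.distrib)
  then show ?thesis using R1 R2' by (simp add: algebra_simps)
qed

end
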